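(* Every Move-To-Front-Every-Other-Access algorithm $A$ (for any choice of initial bits) has competitive ratio at most $2.5$: there is a constant $b$ (depending only on the list length) such that $A(\sigma)\le 2.5\cdot\mathrm{OPT}(\sigma)+b$ for every request sequence $\sigma$, in both the partial and the full cost model.
   Context: Static list update: a list of $l$ distinct items in some initial order; serving a request to the item at position $i$ (from the front) costs $i$ in the full cost model and $i-1$ in the partial cost model; the accessed item may be moved closer to the front for free (free exchange); two adjacent items may be swapped at cost $1$ (paid exchange). $A(\sigma)$ is the total cost of algorithm $A$ and $\mathrm{OPT}(\sigma)$ the minimum cost of any offline algorithm from the same initial list (in the same cost model). A Move-To-Front-Every-Other-Access (MTF2) algorithm maintains one bit per item, with arbitrary initial values; on each request to an item $z$ it flips the bit of $z$, and if the bit becomes $0$ it moves $z$ to the front (free exchange), otherwise it leaves the list unchanged; it makes no paid exchanges. *)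

theory Defs
  imports Complex_Main
begin

text \<open>Static list update. Lists are 'a list with distinct entries; positions are
0-based internally, so the item at 0-based index i is at position i+1 from the front.\<close>

definition idx :: "'a list \<Rightarrow> 'a \<Rightarrow> nat" where
  "idx xs q = length (takeWhile (\<lambda>y. y \<noteq> q) xs)"

text \<open>Cost of accessing q in list xs: position (full model) or position - 1 (partial model).\<close>
definition acc_cost :: "bool \<Rightarrow> 'a list \<Rightarrow> 'a \<Rightarrow> nat" where
  "acc_cost full xs q = idx xs q + (if full then 1 else 0)"

text \<open>Paid exchange: swap the adjacent items at 0-based indices i and i+1
(no-op, but still charged, if i+1 is out of range).\<close>
definition swap :: "nat \<Rightarrow> 'a list \<Rightarrow> 'a list" where
  "swap i xs = (if Suc i < length xs then xs[i := xs ! Suc i, Suc i := xs ! i] else xs)"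

text \<open>Free exchange: move the accessed item q forward by m positions
(to the front if m exceeds its index).\<close>
definition mvfwd :: "nat \<Rightarrow> 'a \<Rightarrow> 'a list \<Rightarrow> 'a list" where
  "mvfwd m q xs = (let k = idx xs q; ys = remove1 q xs
                   in take (k - m) ys @ q # drop (k - m) ys)"

text \<open>General (offline) algorithm: for each request an action (m, sws): first the paid
exchanges sws are performed (cost 1 each), then the request is served at the cost of its
current position, then the item is moved forward by m positions for free.\<close>
fun offline_cost :: "bool \<Rightarrow> 'a list \<Rightarrow> 'a list \<Rightarrow> (nat \<times> nat list) list \<Rightarrow> nat" where
  "offline_cost full xs (q # qs) ((m, sws) # as) =
     (let xs' = foldl (\<lambda>l i. swap i l) xs sws
      in length sws + acc_cost full xs' q + offline_cost full (mvfwd m q xs') qs as)"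
| "offline_cost full xs qs as = 0"

definition OPT :: "bool \<Rightarrow> 'a list \<Rightarrow> 'a list \<Rightarrow> nat" where
  "OPT full s \<sigma> = (LEAST c. \<exists>as. length as = length \<sigma> \<and> offline_cost full s \<sigma> as = c)"

text \<open>MTF2 with bit vector bits (True = 1, False = 0): on a request to q flip its bit;
if the bit becomes 0 move q to the front (free exchange), otherwise leave the list.\<close>
fun mtf2 :: "bool \<Rightarrow> ('a \<Rightarrow> bool) \<Rightarrow> 'a list \<Rightarrow> 'a list \<Rightarrow> nat" where
  "mtf2 full bits xs [] = 0"
| "mtf2 full bits xs (q # qs) =
     (let b = \<not> bits q
      in acc_cost full xs q
         + mtf2 full (bits(q := b)) (if b then xs else mvfwd (idx xs q) q xs) qs)"

end

theory Submission
  imports Defs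
begin

lemma idx_Nil[simp]: "idx [] q = 0" by (simp add: idx_def)
lemma idx_Cons: "idx (x#xs) q = (if x = q then 0 else Suc (idx xs q))" by (simp add: idx_def)
lemma idx_append: "idx (us @ vs) q = (if q \<in> set us then idx us q else length us + idx vs q)"
  by (induction us) (auto simp: idx_Cons)
lemma idx_less: "q \<in> set xs \<Longrightarrow> idx xs q < length xs"
  by (induction xs) (auto simp: idx_Cons)
lemma idx_nth: "q \<in> set xs \<Longrightarrow> xs ! idx xs q = q"
  by (induction xs) (auto simp: idx_Cons)
lemma idx_neq: "p \<in> set xs \<Longrightarrow> q \<in> set xs \<Longrightarrow> p \<noteq> q \<Longrightarrow> idx xs p \<noteq> idx xs q"
  by (metis idx_nth)

lemma idx_ins: assumes "y \<noteq> q" "j \<le> length ys"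
  shows "idx (take j ys @ q # drop j ys) y = (if idx ys y < j then idx ys y else Suc (idx ys y))"
proof -
  have e: "idx ys y = (if y \<in> set (take j ys) then idx (take j ys) y else j + idx (drop j ys) y)"
    using idx_append[of "take j ys" "drop j ys" y] assms(2) by simp
  show ?thesis
  proof (cases "y \<in> set (take j ys)")
    case True
    then have "idx (take j ys) y < j" using idx_less[OF True] assms(2) by simp
    then show ?thesis using True e by (simp add: idx_append)
  next
    case False
    then show ?thesis using e assms by (simp add: idx_append idx_Cons)
  qed
qed

lemma idx_ins_q: "q \<notin> set ys \<Longrightarrow> j \<le> length ys \<Longrightarrow> idx (take j ys @ q # drop j ys) q = j"
  using set_take_subset[of j ys] by (auto simp: idx_append idx_Cons)

lemma decomp: assumes "q \<in> set xs"
  shows "xs = take (idx xs q) (remove1 q xs) @ q # drop (idx xs q) (remove1 q xs)"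
proof -
  obtain us vs where "xs = us @ q # vs" "q \<notin> set us" using split_list_first[OF assms] by blast
  then show ?thesis by (simp add: idx_append idx_Cons remove1_append)
qed

lemma ins_distinct: "distinct ys \<Longrightarrow> q \<notin> set ys \<Longrightarrow> distinct (take j ys @ q # drop j ys)"
  using set_take_subset[of j ys] set_drop_subset[of j ys] set_take_disj_set_drop_if_distinct[of ys j j]
  by auto

lemma ins_set: "set (take j ys @ q # drop j ys) = insert q (set ys)"
  by (metis Un_insert_right append_take_drop_id list.simps(15) set_append)

lemma mvfwd_props:
  assumes "distinct xs" "q \<in> set xs"
  shows "set (mvfwd m q xs) = set xs" "distinct (mvfwd m q xs)"
    "\<And>y z. y \<noteq> q \<Longrightarrow> z \<noteq> q \<Longrightarrow> (idx (mvfwd m q xs) y < idx (mvfwd m q xs) z) = (idx xs y < idx xs z)"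
    "\<And>y. y \<noteq> q \<Longrightarrow> idx (mvfwd m q xs) y < idx (mvfwd m q xs) q \<Longrightarrow> idx xs y < idx xs q"
    "m = idx xs q \<Longrightarrow> idx (mvfwd m q xs) q = 0"
proof -
  define ys where "ys = remove1 q xs"
  define k where "k = idx xs q"
  have qn: "q \<notin> set ys" using assms ys_def by simp
  have dy: "distinct ys" using assms ys_def by simp
  have kl: "k \<le> length ys" using idx_less[OF assms(2)] assms ys_def k_def
    by (simp add: length_remove1)
  have xs: "xs = take k ys @ q # drop k ys" using decomp[OF assms(2)] ys_def k_def by simp
  have mv: "mvfwd m q xs = take (k - m) ys @ q # drop (k - m) ys"
    by (simp add: mvfwd_def Let_def ys_def k_def)
  have kml: "k - m \<le> length ys" using kl by simp
  have ix: "\<And>y. idx xs y = idx (take k ys @ q # drop k ys) y" using xs by metis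
  show "set (mvfwd m q xs) = set xs" unfolding mv ins_set using xs ins_set by metis
  show "distinct (mvfwd m q xs)" unfolding mv using ins_distinct[OF dy qn] .
  show "\<And>y z. y \<noteq> q \<Longrightarrow> z \<noteq> q \<Longrightarrow> (idx (mvfwd m q xs) y < idx (mvfwd m q xs) z) = (idx xs y < idx xs z)"
    unfolding mv ix by (auto simp: idx_ins[OF _ kml] idx_ins[OF _ kl])
  show "\<And>y. y \<noteq> q \<Longrightarrow> idx (mvfwd m q xs) y < idx (mvfwd m q xs) q \<Longrightarrow> idx xs y < idx xs q"
    unfolding mv ix by (auto simp: idx_ins[OF _ kml] idx_ins[OF _ kl] idx_ins_q[OF qn kml] idx_ins_q[OF qn kl] split: if_splits)
  show "m = idx xs q \<Longrightarrow> idx (mvfwd m q xs) q = 0"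
    unfolding mv using idx_ins_q[OF qn kml] k_def by simp
qed

lemma idx_card: assumes "distinct xs" "q \<in> set xs"
  shows "idx xs q = card (set xs \<inter> {y. idx xs y < idx xs q})"
proof -
  obtain us vs where u: "xs = us @ q # vs" "q \<notin> set us" using split_list_first[OF assms(2)] by blast
  have "set xs \<inter> {y. idx xs y < idx xs q} = set us"
  proof
    show "set us \<subseteq> set xs \<inter> {y. idx xs y < idx xs q}"
      using u by (auto simp: idx_append idx_Cons idx_less)
    show "set xs \<inter> {y. idx xs y < idx xs q} \<subseteq> set us"
      using u by (auto simp: idx_append idx_Cons idx_less split: if_splits)
  qed
  moreover have "distinct us" using assms u by simp
  ultimately show ?thesis using u by (simp add: idx_append idx_Cons distinct_card)
qed

lemma swap_cases: "Suc i < length ys \<Longrightarrow> \<exists>us a b ws. ys = us @ a # b # ws \<and> swap i ys = us @ b # a # ws"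
proof -
  assume h: "Suc i < length ys"
  define us where "us = take i ys"
  have ys: "ys = us @ ys ! i # ys ! Suc i # drop (Suc (Suc i)) ys"
    using h unfolding us_def by (metis Cons_nth_drop_Suc Suc_lessD append_take_drop_id)
  have li: "length us = i" using h us_def by simp
  obtain a b ws where abw: "ys = us @ a # b # ws" using ys by blast
  have "swap i ys = us @ b # a # ws"
    unfolding swap_def using h abw li by (simp add: list_update_append nth_append)
  then show ?thesis using abw by blast
qed

definition potb :: "bool \<Rightarrow> bool \<Rightarrow> bool \<Rightarrow> bool \<Rightarrow> int" where
  "potb bx bz a c = (if a then (if c then of_bool bz else 4 - 2 * of_bool bz + of_bool bx) else 0)"

definition pot :: "('a \<Rightarrow> bool) \<Rightarrow> 'a list \<Rightarrow> 'a list \<Rightarrow> 'a \<Rightarrow> 'a \<Rightarrow> int" where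
  "pot bits xs ys x y = potb (bits x) (bits y) (x \<noteq> y \<and> idx xs x < idx xs y) (idx ys x < idx ys y)"

definition Phi :: "'a set \<Rightarrow> ('a \<Rightarrow> bool) \<Rightarrow> 'a list \<Rightarrow> 'a list \<Rightarrow> int" where
  "Phi S bits xs ys = (\<Sum>x\<in>S. \<Sum>y\<in>S. pot bits xs ys x y)"

lemma Phi_cart: "Phi S bits xs ys = (\<Sum>p\<in>S \<times> S. pot bits xs ys (fst p) (snd p))"
  unfolding Phi_def sum.cartesian_product by (simp add: split_def)

lemma potb_ge: "potb bx bz a c \<ge> 0" by (simp add: potb_def)
lemma potb_le: "potb bx bz a c \<le> 5" by (simp add: potb_def)
lemma pot_ge: "pot bits xs ys x y \<ge> 0" by (simp add: pot_def potb_ge)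
lemma pot_pair_le: "pot bits xs ys x y + pot bits xs ys y x \<le> 5"
  by (auto simp: pot_def potb_def)

lemma Phi_ge: "Phi S bits xs ys \<ge> 0"
  unfolding Phi_def by (intro sum_nonneg) (simp add: pot_ge)

lemma Phi_le: "Phi S bits xs ys \<le> 5 * int (card S) * int (card S)"
proof -
  have "Phi S bits xs ys \<le> (\<Sum>x\<in>S. \<Sum>y\<in>S. 5)"
    unfolding Phi_def by (intro sum_mono) (simp add: pot_def potb_le)
  then show ?thesis by simp
qed

lemma pair_ineq:
  assumes "a' = (\<not> bq \<and> a)" "c' \<longrightarrow> c"
  shows "2 * of_bool a + (potb (\<not> bq) bz (\<not> a') (\<not> c') + potb bz (\<not> bq) a' c')
         - (potb bq bz (\<not> a) (\<not> c) + potb bz bq a c) \<le> 5 * (of_bool c :: int)"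
  using assms by (cases a; cases c; cases c'; cases bq; cases bz) (auto simp: potb_def)

lemma swap_Phi:
  assumes "distinct ys" "set ys = S"
  shows "Phi S bits xs (swap i ys) \<le> Phi S bits xs ys + 5" "distinct (swap i ys)" "set (swap i ys) = S"
proof -
  have "(Phi S bits xs (swap i ys) \<le> Phi S bits xs ys + 5) \<and> distinct (swap i ys) \<and> set (swap i ys) = S"
  proof (cases "Suc i < length ys")
    case False
    then show ?thesis using assms by (simp add: swap_def)
  next
    case True
    obtain us a b ws where u: "ys = us @ a # b # ws" "swap i ys = us @ b # a # ws"
      using swap_cases[OF True] by blast
    have ab: "a \<noteq> b" "a \<notin> set us" "b \<notin> set us" "a \<notin> set ws" "b \<notin> set ws"
      using assms u by auto
    have fin: "finite S" using assms by auto
    define D where "D = (\<lambda>p. pot bits xs (swap i ys) (fst p) (snd p) - pot bits xs ys (fst p) (snd p))"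
    have D0: "D p = 0" if "p \<in> S \<times> S - {(a,b),(b,a)}" for p
    proof -
      obtain x y where p: "p = (x,y)" by fastforce
      have "(idx (us @ b # a # ws) x < idx (us @ b # a # ws) y) = (idx (us @ a # b # ws) x < idx (us @ a # b # ws) y)" if "x \<noteq> y"
        using that \<open>p \<in> _\<close> p ab
        by (auto simp: idx_append idx_Cons dest: idx_less)
      then have "(idx (swap i ys) x < idx (swap i ys) y) = (idx ys x < idx ys y)" if "x \<noteq> y"
        using that u by metis
      then show ?thesis unfolding D_def p pot_def by (cases "x = y") auto
    qed
    have "Phi S bits xs (swap i ys) - Phi S bits xs ys = (\<Sum>p\<in>S \<times> S. D p)"
      unfolding Phi_cart D_def by (simp add: sum_subtractf)
    also have "\<dots> = (\<Sum>p\<in>{(a,b),(b,a)}. D p)"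
      using D0 fin assms u by (intro sum.mono_neutral_right) auto
    also have "\<dots> = D (a,b) + D (b,a)" using ab by simp
    also have "\<dots> \<le> 5" unfolding D_def
      using pot_pair_le[of bits xs "swap i ys" a b] pot_ge[of bits xs ys a b] pot_ge[of bits xs ys b a] by simp
    finally show ?thesis using assms u by auto
  qed
  then show "Phi S bits xs (swap i ys) \<le> Phi S bits xs ys + 5" "distinct (swap i ys)" "set (swap i ys) = S"
    by auto
qed

lemma swaps_Phi:
  assumes "distinct ys" "set ys = S"
  shows "Phi S bits xs (foldl (\<lambda>l i. swap i l) ys sws) \<le> Phi S bits xs ys + 5 * int (length sws)
    \<and> distinct (foldl (\<lambda>l i. swap i l) ys sws) \<and> set (foldl (\<lambda>l i. swap i l) ys sws) = S"
  using assms
proof (induction sws arbitrary: ys)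
  case Nil then show ?case by simp
next
  case (Cons i sws)
  note s1 = swap_Phi(1)[OF Cons.prems, where bits=bits and xs=xs and i=i]
  note s2 = swap_Phi(2,3)[OF Cons.prems, where i=i]
  from Cons.IH[OF s2] s1 show ?case by simp
qed

lemma sum_split_q:
  fixes D :: "'a \<Rightarrow> 'a \<Rightarrow> int"
  assumes "finite S" "q \<in> S" "\<And>x y. x \<in> S \<Longrightarrow> y \<in> S \<Longrightarrow> x \<noteq> q \<Longrightarrow> y \<noteq> q \<Longrightarrow> D x y = 0" "D q q = 0"
  shows "(\<Sum>x\<in>S. \<Sum>y\<in>S. D x y) = (\<Sum>y\<in>S. D q y + D y q)"
proof -
  have i: "(\<Sum>y\<in>S. D x y) = D x q" if "x \<in> S - {q}" for x
  proof -
    have "(\<Sum>y\<in>S. D x y) = D x q + (\<Sum>y\<in>S - {q}. D x y)"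
      using assms(1,2) by (simp add: sum.remove)
    also have "(\<Sum>y\<in>S - {q}. D x y) = 0" using assms(3) that by (intro sum.neutral) auto
    finally show ?thesis by simp
  qed
  have "(\<Sum>x\<in>S. \<Sum>y\<in>S. D x y) = (\<Sum>y\<in>S. D q y) + (\<Sum>x\<in>S - {q}. \<Sum>y\<in>S. D x y)"
    by (rule sum.remove[OF assms(1,2)])
  also have "(\<Sum>x\<in>S - {q}. \<Sum>y\<in>S. D x y) = (\<Sum>x\<in>S - {q}. D x q)"
    using i by (rule sum.cong[OF refl])
  also have "\<dots> = (\<Sum>x\<in>S. D x q)"
    using sum.remove[OF assms(1,2), of "\<lambda>x. D x q"] assms(4) by simp
  finally show ?thesis by (simp add: sum.distrib)
qed

lemma access_Phi:
  assumes "distinct xs" "distinct ys" "set xs = S" "set ys = S" "q \<in> S"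
    and nb: "nb = (\<not> bits q)"
    and xs': "xs' = (if nb then xs else mvfwd (idx xs q) q xs)"
    and ys': "ys' = mvfwd m q ys"
  shows "2 * int (idx xs q) + Phi S (bits(q:=nb)) xs' ys' \<le> 5 * int (idx ys q) + Phi S bits xs ys"
    "distinct xs'" "set xs' = S" "distinct ys'" "set ys' = S"
proof -
  have fin: "finite S" using assms by auto
  have qx: "q \<in> set xs" and qy: "q \<in> set ys" using assms by auto
  note mx = mvfwd_props[OF assms(1) qx, where m="idx xs q"]
  note my = mvfwd_props[OF assms(2) qy, where m=m]
  show dx: "distinct xs'" "set xs' = S" using mx assms by (auto simp: xs')
  show dy: "distinct ys'" "set ys' = S" using my assms by (auto simp: ys')
  have x_oth: "(idx xs' y < idx xs' z) = (idx xs y < idx xs z)" if "y \<noteq> q" "z \<noteq> q" for y z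
    using mx(3)[OF that] by (auto simp: xs')
  have y_oth: "(idx ys' y < idx ys' z) = (idx ys y < idx ys z)" if "y \<noteq> q" "z \<noteq> q" for y z
    using my(3)[OF that] by (auto simp: ys')
  have x_q: "(idx xs' y < idx xs' q) = (nb \<and> idx xs y < idx xs q)" if "y \<noteq> q" for y
    using mx(5) by (auto simp: xs')
  have y_q: "idx ys' y < idx ys' q \<longrightarrow> idx ys y < idx ys q" if "y \<noteq> q" for y
    using my(4)[OF that] by (auto simp: ys')
  have tri: "(idx l q < idx l y) = (\<not> idx l y < idx l q)" if "y \<in> set l" "q \<in> set l" "y \<noteq> q" for y and l :: "'a list"
    using idx_neq[OF that] by auto
  define D where "D = (\<lambda>x y. pot (bits(q:=nb)) xs' ys' x y - pot bits xs ys x y)"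
  have D0: "D x y = 0" if "x \<in> S" "y \<in> S" "x \<noteq> q" "y \<noteq> q" for x y
    using that x_oth y_oth unfolding D_def pot_def by simp
  have Dqq: "D q q = 0" unfolding D_def pot_def by (simp add: potb_def)
  have per: "2 * of_bool (idx xs y < idx xs q) + (D q y + D y q) \<le> 5 * (of_bool (idx ys y < idx ys q) :: int)"
    if "y \<in> S" for y
  proof (cases "y = q")
    case True then show ?thesis using Dqq by simp
  next
    case False
    have yx: "y \<in> set xs" "y \<in> set ys" "y \<in> set xs'" "y \<in> set ys'" using that assms dx dy by auto
    have qq: "q \<in> set xs'" "q \<in> set ys'" using assms dx dy by auto
    have e: "D q y + D y q = (potb (\<not> bits q) (bits y) (\<not> (idx xs' y < idx xs' q)) (\<not> (idx ys' y < idx ys' q))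
         + potb (bits y) (\<not> bits q) (idx xs' y < idx xs' q) (idx ys' y < idx ys' q))
         - (potb (bits q) (bits y) (\<not> (idx xs y < idx xs q)) (\<not> (idx ys y < idx ys q))
         + potb (bits y) (bits q) (idx xs y < idx xs q) (idx ys y < idx ys q))"
      unfolding D_def pot_def using False tri[OF yx(1) qx False] tri[OF yx(2) qy False]
        tri[OF yx(3) qq(1) False] tri[OF yx(4) qq(2) False] nb by simp
    have pi: "2 * of_bool (idx xs y < idx xs q) + (potb (\<not> bits q) (bits y) (\<not> (idx xs' y < idx xs' q)) (\<not> (idx ys' y < idx ys' q))
         + potb (bits y) (\<not> bits q) (idx xs' y < idx xs' q) (idx ys' y < idx ys' q))
         - (potb (bits q) (bits y) (\<not> (idx xs y < idx xs q)) (\<not> (idx ys y < idx ys q))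
         + potb (bits y) (bits q) (idx xs y < idx xs q) (idx ys y < idx ys q)) \<le> 5 * (of_bool (idx ys y < idx ys q) :: int)"
      by (rule pair_ineq) (use x_q[OF False] y_q[OF False] nb in auto)
    show ?thesis unfolding e using pi by linarith
  qed
  have "Phi S (bits(q:=nb)) xs' ys' - Phi S bits xs ys = (\<Sum>x\<in>S. \<Sum>y\<in>S. D x y)"
    unfolding Phi_def D_def by (simp add: sum_subtractf)
  also have "\<dots> = (\<Sum>y\<in>S. D q y + D y q)"
    by (rule sum_split_q[where D=D, OF fin assms(5) D0 Dqq])
  also have "\<dots> \<le> (\<Sum>y\<in>S. 5 * of_bool (idx ys y < idx ys q) - 2 * of_bool (idx xs y < idx xs q))"
    using per by (intro sum_mono) (smt (verit))
  also have "\<dots> = 5 * int (idx ys q) - 2 * int (idx xs q)"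
    using fin idx_card[OF assms(1) qx] idx_card[OF assms(2) qy] assms(3,4)
    by (simp add: sum_subtractf sum_distrib_left[symmetric])
  finally show "2 * int (idx xs q) + Phi S (bits(q:=nb)) xs' ys' \<le> 5 * int (idx ys q) + Phi S bits xs ys"
    by simp
qed

lemma main_ineq:
  "distinct xs \<Longrightarrow> distinct ys \<Longrightarrow> set xs = S \<Longrightarrow> set ys = S \<Longrightarrow> set \<sigma> \<subseteq> S
   \<Longrightarrow> length as = length \<sigma>
   \<Longrightarrow> 2 * int (mtf2 full bits xs \<sigma>) \<le> 5 * int (offline_cost full ys \<sigma> as) + Phi S bits xs ys"
proof (induction \<sigma> arbitrary: xs ys bits as)
  case Nil
  then show ?case using Phi_ge[of S bits xs ys] by simp
next
  case (Cons q \<sigma>)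
  obtain m sws as' where as: "as = (m, sws) # as'" using Cons.prems(6)
    by (cases as) auto
  define ys1 where "ys1 = foldl (\<lambda>l i. swap i l) ys sws"
  define nb where "nb = (\<not> bits q)"
  define xs' where "xs' = (if nb then xs else mvfwd (idx xs q) q xs)"
  define ys' where "ys' = mvfwd m q ys1"
  have sw: "Phi S bits xs ys1 \<le> Phi S bits xs ys + 5 * int (length sws)" "distinct ys1" "set ys1 = S"
    using swaps_Phi[OF Cons.prems(2,4), where bits=bits and xs=xs and sws=sws] ys1_def by auto
  have qS: "q \<in> S" using Cons.prems(5) by simp
  note ac = access_Phi[where bits=bits and q=q and xs=xs and ys=ys1 and m=m, OF Cons.prems(1) sw(2) Cons.prems(3) sw(3) qS nb_def xs'_def ys'_def]
  have IH: "2 * int (mtf2 full (bits(q:=nb)) xs' \<sigma>) \<le> 5 * int (offline_cost full ys' \<sigma> as') + Phi S (bits(q:=nb)) xs' ys'"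
    using Cons.IH[OF ac(2,4,3,5)] Cons.prems(5,6) as by auto
  have m: "mtf2 full bits xs (q # \<sigma>) = acc_cost full xs q + mtf2 full (bits(q:=nb)) xs' \<sigma>"
    by (simp add: Let_def nb_def xs'_def)
  have o: "offline_cost full ys (q # \<sigma>) as = length sws + acc_cost full ys1 q + offline_cost full ys' \<sigma> as'"
    by (simp add: as Let_def ys1_def ys'_def)
  show ?case unfolding m o using IH ac(1) sw(1) by (simp add: acc_cost_def)
qed

theorem lemma12:
  fixes full :: bool
  shows "\<forall>l::nat. \<exists>b::real. \<forall>(s::'a list) (bits::'a \<Rightarrow> bool) (\<sigma>::'a list).
           distinct s \<and> length s = l \<and> set \<sigma> \<subseteq> set s \<longrightarrow>
           real (mtf2 full bits s \<sigma>) \<le> 5/2 * real (OPT full s \<sigma>) + b"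
proof
  fix l :: nat
  show "\<exists>b::real. \<forall>(s::'a list) (bits::'a \<Rightarrow> bool) (\<sigma>::'a list).
           distinct s \<and> length s = l \<and> set \<sigma> \<subseteq> set s \<longrightarrow>
           real (mtf2 full bits s \<sigma>) \<le> 5/2 * real (OPT full s \<sigma>) + b"
  proof (intro exI allI impI)
    fix s :: "'a list" and bits :: "'a \<Rightarrow> bool" and \<sigma> :: "'a list"
    assume h: "distinct s \<and> length s = l \<and> set \<sigma> \<subseteq> set s"
    have ex: "\<exists>c as. length as = length \<sigma> \<and> offline_cost full s \<sigma> as = c"
      by (rule exI[of _ "offline_cost full s \<sigma> (replicate (length \<sigma>) (0, []))"]) (rule exI[of _ "replicate (length \<sigma>) (0, [])"], simp)
    obtain as where as: "length as = length \<sigma>" "offline_cost full s \<sigma> as = OPT full s \<sigma>"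
      using LeastI_ex[OF ex] unfolding OPT_def by blast
    have cs: "card (set s) = l" using h distinct_card by blast
    have "2 * int (mtf2 full bits s \<sigma>) \<le> 5 * int (OPT full s \<sigma>) + Phi (set s) bits s s"
      using main_ineq[of s s "set s" \<sigma> as full bits] h as by auto
    moreover have "Phi (set s) bits s s \<le> 5 * int l * int l" using Phi_le[of "set s" bits s s] cs by simp
    ultimately have "2 * int (mtf2 full bits s \<sigma>) \<le> 5 * int (OPT full s \<sigma>) + 5 * int l * int l" by linarith
    then have "2 * real (mtf2 full bits s \<sigma>) \<le> 5 * real (OPT full s \<sigma>) + 5 * real l * real l"
      by (metis (mono_tags, opaque_lifting) of_int_le_iff of_int_add of_int_mult of_int_of_nat_eq of_int_numeral)
    then show "real (mtf2 full bits s \<sigma>) \<le> 5/2 * real (OPT full s \<sigma>) + 5/2 * real l * real l"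
      by simp
  qed
qed

end
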